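(* Let $S$ be the submonoid of $\mathbb N^d$ generated by $\mathcal A=\{\mathbf a_1,\dots,\mathbf a_n\}$ and let $\mathbf a\in\mathrm{PF}(S)$. If $2\mathbf a\in S$, then $S\cup\{\mathbf a\}$ is the submonoid of $\mathbb N^d$ generated by $\mathcal A\cup\{\mathbf a\}$. Moreover: (a) if $\mathbf a\in\mathrm F(S)$ and $\mathrm{PF}(S)\neq\{\mathbf a\}$, then $S\cup\{\mathbf a\}$ is an MPD-semigroup; (b) if $S$ is a $\mathcal C$-semigroup, then $S\cup\{\mathbf a\}$ is a $\mathcal C$-semigroup.
   Context: For a finitely generated submonoid $T\subseteq\mathbb N^d$ generated by $\mathbf t_1,\dots,\mathbf t_m$: $\mathrm{pos}(T)=\{\sum\lambda_i\mathbf t_i:\lambda_i\in\mathbb Q_{\ge0}\}$, $\mathcal H(T)=(\mathrm{pos}(T)\setminus T)\cap\mathbb N^d$, $\mathrm{PF}(T)=\{\mathbf b\in\mathcal H(T):\mathbf b+(T\setminus\{0\})\subseteq T\}$; $T$ is an MPD-semigroup if for a field $\Bbbk$ the $\Bbbk[x_1,\dots,x_m]$-module $\Bbbk[T]$ (via $x_i\mapsto\chi^{\mathbf t_i}$) has projective dimension $m-1$ (equivalently depth $1$); $T$ is a $\mathcal C$-semigroup if $\mathcal H(T)$ is finite. A term order on $\mathbb N^d$ is a total order compatible with addition with $0$ least; $\mathrm F(T)$ is the set of $\mathbf f\in\mathcal H(T)$ with $\mathbf f=\max_\prec\mathcal H(T)$ for some term order $\prec$ (Frobenius elements). *)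

theory Defs
  imports Complex_Main "HOL-Library.Function_Algebras" "HOL-Library.Poly_Mapping"
begin

text \<open>Elements of N^d are functions 'd \<Rightarrow> nat for a finite index type 'd
  (pointwise addition, zero vector 0).\<close>

inductive_set monoid_gen :: "('d \<Rightarrow> nat) set \<Rightarrow> ('d \<Rightarrow> nat) set"
  for A :: "('d \<Rightarrow> nat) set" where
  zero: "0 \<in> monoid_gen A"
| gen: "a \<in> A \<Longrightarrow> a \<in> monoid_gen A"
| add: "x \<in> monoid_gen A \<Longrightarrow> y \<in> monoid_gen A \<Longrightarrow> x + y \<in> monoid_gen A"

definition pos_cone :: "('d \<Rightarrow> nat) set \<Rightarrow> ('d \<Rightarrow> rat) set" where
  "pos_cone T = {v. \<exists>F c. finite F \<and> F \<subseteq> T \<and> (\<forall>t\<in>F. c t \<ge> 0) \<and>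
      v = (\<Sum>t\<in>F. (\<lambda>j. c t * of_nat (t j)))}"

definition holes :: "('d \<Rightarrow> nat) set \<Rightarrow> ('d \<Rightarrow> nat) set" where
  "holes T = {b. (\<lambda>j. of_nat (b j) :: rat) \<in> pos_cone T \<and> b \<notin> T}"

definition PF :: "('d \<Rightarrow> nat) set \<Rightarrow> ('d \<Rightarrow> nat) set" where
  "PF T = {b \<in> holes T. \<forall>t \<in> T - {0}. b + t \<in> T}"

definition term_order :: "(('d \<Rightarrow> nat) \<Rightarrow> ('d \<Rightarrow> nat) \<Rightarrow> bool) \<Rightarrow> bool" where
  "term_order le \<longleftrightarrow>
     (\<forall>x. le x x) \<and> (\<forall>x y. le x y \<and> le y x \<longrightarrow> x = y) \<and>
     (\<forall>x y z. le x y \<and> le y z \<longrightarrow> le x z) \<and> (\<forall>x y. le x y \<or> le y x) \<and>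
     (\<forall>x y z. le x y \<longrightarrow> le (x + z) (y + z)) \<and> (\<forall>x. le 0 x)"

definition Frob :: "('d \<Rightarrow> nat) set \<Rightarrow> ('d \<Rightarrow> nat) set" where
  "Frob T = {f \<in> holes T. \<exists>le. term_order le \<and> (\<forall>h \<in> holes T. le h f)}"

definition C_semigroup :: "('d \<Rightarrow> nat) set \<Rightarrow> bool" where
  "C_semigroup T \<longleftrightarrow> finite (holes T)"

text \<open>The semigroup ring k[T] (finitely supported k-valued functions on N^d
  supported in T, with convolution product), and the image in k[T] of the
  homogeneous maximal ideal (x_1,...,x_m) of k[x_1,...,x_m]: the span of
  the monomials chi^t, t \<in> T - {0}.\<close>
definition sgr :: "'k itself \<Rightarrow> ('d \<Rightarrow> nat) set \<Rightarrow> (('d \<Rightarrow> nat) \<Rightarrow>\<^sub>0 'k::field) set" where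
  "sgr _ T = {p. Poly_Mapping.keys p \<subseteq> T}"

definition sgr_max :: "'k itself \<Rightarrow> ('d \<Rightarrow> nat) set \<Rightarrow> (('d \<Rightarrow> nat) \<Rightarrow>\<^sub>0 'k::field) set" where
  "sgr_max _ T = {p. Poly_Mapping.keys p \<subseteq> T - {0}}"

text \<open>depth of k[T] (as module over the polynomial ring) is at least 1: there is
  a k[T]-regular sequence of length 1 in the maximal ideal.\<close>
definition depth_ge1 :: "'k::field itself \<Rightarrow> ('d \<Rightarrow> nat) set \<Rightarrow> bool" where
  "depth_ge1 K T \<longleftrightarrow> (\<exists>f \<in> sgr_max K T.
      (\<forall>h \<in> sgr K T. f * h = 0 \<longrightarrow> h = 0) \<and>
      (\<forall>q \<in> sgr K T. f * q \<noteq> 1))"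

text \<open>depth at least 2: a regular sequence f, g of length 2 in the maximal ideal.\<close>
definition depth_ge2 :: "'k::field itself \<Rightarrow> ('d \<Rightarrow> nat) set \<Rightarrow> bool" where
  "depth_ge2 K T \<longleftrightarrow> (\<exists>f \<in> sgr_max K T. \<exists>g \<in> sgr_max K T.
      (\<forall>h \<in> sgr K T. f * h = 0 \<longrightarrow> h = 0) \<and>
      (\<forall>h \<in> sgr K T. (\<exists>q \<in> sgr K T. g * h = f * q) \<longrightarrow> (\<exists>q \<in> sgr K T. h = f * q)) \<and>
      (\<forall>p \<in> sgr K T. \<forall>q \<in> sgr K T. f * p + g * q \<noteq> 1))"

text \<open>MPD-semigroup over the field 'k: depth k[T] = 1 (equivalently, by
  Auslander--Buchsbaum, projective dimension m-1).\<close>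
definition MPD_semigroup :: "'k::field itself \<Rightarrow> ('d \<Rightarrow> nat) set \<Rightarrow> bool" where
  "MPD_semigroup K T \<longleftrightarrow> depth_ge1 K T \<and> \<not> depth_ge2 K T"

end

theory Submission
  imports Defs
begin


lemma lookup_single_mult:
  fixes p :: "('a::cancel_comm_monoid_add) \<Rightarrow>\<^sub>0 'b::semiring_1"
  shows "Poly_Mapping.lookup (Poly_Mapping.single t 1 * p) k = Sum_any (\<lambda>q. Poly_Mapping.lookup p q when k = t + q)"
  unfolding lookup_mult lookup_single when_mult by (simp add: when_def)

lemma lookup_single_mult_shift:
  fixes p :: "('a::cancel_comm_monoid_add) \<Rightarrow>\<^sub>0 'b::semiring_1"
  shows "Poly_Mapping.lookup (Poly_Mapping.single t 1 * p) (t + s) = Poly_Mapping.lookup p s"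
  by (simp add: lookup_single_mult when_def)

lemma lookup_single_mult_zero:
  fixes p :: "('a::cancel_comm_monoid_add) \<Rightarrow>\<^sub>0 'b::semiring_1"
  assumes "\<And>q. k \<noteq> t + q"
  shows "Poly_Mapping.lookup (Poly_Mapping.single t 1 * p) k = 0"
  using assms by (simp add: lookup_single_mult when_def)

lemma keys_single_mult_sub:
  fixes p :: "('a::cancel_comm_monoid_add) \<Rightarrow>\<^sub>0 'b::semiring_1"
  assumes "\<And>v. v \<in> Poly_Mapping.keys p \<Longrightarrow> t + v \<in> T"
  shows "Poly_Mapping.keys (Poly_Mapping.single t 1 * p) \<subseteq> T"
proof
  fix k assume "k \<in> Poly_Mapping.keys (Poly_Mapping.single t 1 * p)"
  with keys_mult obtain u v where "k = u + v" "u \<in> Poly_Mapping.keys (Poly_Mapping.single t (1::'b))"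
     "v \<in> Poly_Mapping.keys p" by blast
  then show "k \<in> T" using assms by (cases "(1::'b) = 0") auto
qed

lemma cone_add:
  assumes "u \<in> pos_cone T" "v \<in> pos_cone T"
  shows "u + v \<in> pos_cone T"
proof -
  obtain F1 c1 where F1: "finite F1" "F1 \<subseteq> T" "\<forall>t\<in>F1. c1 t \<ge> 0"
    "u = (\<Sum>t\<in>F1. (\<lambda>j. c1 t * of_nat (t j)))"
    using assms(1) unfolding pos_cone_def by blast
  obtain F2 c2 where F2: "finite F2" "F2 \<subseteq> T" "\<forall>t\<in>F2. c2 t \<ge> 0"
    "v = (\<Sum>t\<in>F2. (\<lambda>j. c2 t * of_nat (t j)))"
    using assms(2) unfolding pos_cone_def by blast
  define c1' where "c1' t = (if t \<in> F1 then c1 t else 0)" for t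
  define c2' where "c2' t = (if t \<in> F2 then c2 t else 0)" for t
  define c where "c t = c1' t + c2' t" for t
  have fin: "finite (F1 \<union> F2)" using F1 F2 by auto
  have e1: "(\<Sum>t\<in>F1 \<union> F2. (\<lambda>j. c1' t * of_nat (t j))) = u"
    unfolding F1(4)
    by (rule sum.mono_neutral_cong_right[OF fin]) (auto simp: c1'_def fun_eq_iff)
  have e2: "(\<Sum>t\<in>F1 \<union> F2. (\<lambda>j. c2' t * of_nat (t j))) = v"
    unfolding F2(4)
    by (rule sum.mono_neutral_cong_right[OF fin]) (auto simp: c2'_def fun_eq_iff)
  have "(\<Sum>t\<in>F1 \<union> F2. (\<lambda>j. c t * of_nat (t j))) =
        (\<Sum>t\<in>F1 \<union> F2. (\<lambda>j. c1' t * of_nat (t j)) + (\<lambda>j. c2' t * of_nat (t j)))"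
    by (rule sum.cong) (auto simp: c_def fun_eq_iff distrib_right)
  also have "\<dots> = u + v" by (simp add: sum.distrib e1 e2)
  finally have "u + v = (\<Sum>t\<in>F1 \<union> F2. (\<lambda>j. c t * of_nat (t j)))" by simp
  moreover have "\<forall>t\<in>F1 \<union> F2. c t \<ge> 0" using F1 F2 by (auto simp: c_def c1'_def c2'_def)
  moreover have "F1 \<union> F2 \<subseteq> T" using F1(2) F2(2) by blast
  ultimately show ?thesis unfolding pos_cone_def using fin
    by (intro CollectI exI[of _ "F1 \<union> F2"] exI[of _ c] conjI)
qed

lemma cone_single:
  assumes "t \<in> T" "c \<ge> 0"
  shows "(\<lambda>j. c * of_nat (t j)) \<in> pos_cone T"
proof -
  have "(\<lambda>j. c * of_nat (t j)) = (\<Sum>s\<in>{t}. (\<lambda>j. c * of_nat (s j)))" by simp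
  then show ?thesis unfolding pos_cone_def using assms
    by (intro CollectI exI[of _ "{t}"] exI[of _ "\<lambda>_. c"]) simp
qed
lemma cone_of_add:
  "(\<lambda>j. of_nat ((x + y) j) :: rat) = (\<lambda>j. of_nat (x j)) + (\<lambda>j. of_nat (y j))"
  by (simp add: fun_eq_iff)


lemma cone_insert:
  fixes S :: "('d \<Rightarrow> nat) set"
  assumes "a + a \<in> S"
  shows "pos_cone (S \<union> {a}) \<subseteq> pos_cone S"
proof
  fix v assume "v \<in> pos_cone (S \<union> {a})"
  then obtain F c where F: "finite F" "F \<subseteq> S \<union> {a}" "\<forall>t\<in>F. c t \<ge> 0"
    and veq: "v = (\<Sum>t\<in>F. (\<lambda>j. c t * of_nat (t j)))"
    unfolding pos_cone_def by blast
  have sub: "F - {a} \<subseteq> S" using F(2) by blast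
  have v1: "(\<Sum>t\<in>F - {a}. (\<lambda>j. c t * of_nat (t j))) \<in> pos_cone S"
    unfolding pos_cone_def using F(1,3) sub
    by (intro CollectI exI[of _ "F - {a}"] exI[of _ c] conjI) auto
  show "v \<in> pos_cone S"
  proof (cases "a \<in> F")
    case False
    then have "F - {a} = F" by blast
    then show ?thesis using v1 veq by simp
  next
    case True
    have v2: "v = (\<lambda>j. c a * of_nat (a j)) + (\<Sum>t\<in>F - {a}. (\<lambda>j. c t * of_nat (t j)))"
      unfolding veq by (rule sum.remove[OF F(1) True])
    have "(\<lambda>j. c a * of_nat (a j)) = (\<lambda>j. (c a / 2) * of_nat ((a + a) j))"
      by (simp add: fun_eq_iff)
    moreover have "(\<lambda>j. (c a / 2) * of_nat ((a + a) j)) \<in> pos_cone S"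
      by (rule cone_single[OF assms]) (use F(3) True in simp)
    ultimately have "(\<lambda>j. c a * of_nat (a j)) \<in> pos_cone S" by simp
    from cone_add[OF this v1] show ?thesis unfolding v2 .
  qed
qed


lemma gen_mono: "x \<in> monoid_gen A \<Longrightarrow> A \<subseteq> B \<Longrightarrow> x \<in> monoid_gen B"
  by (induction rule: monoid_gen.induct) (auto intro: monoid_gen.intros)

lemma nat_fun_add_eq_0: "(x::'d \<Rightarrow> nat) + y = 0 \<Longrightarrow> x = 0"
  by (simp add: fun_eq_iff)

theorem lemma4p1:
  fixes A :: "('d::finite \<Rightarrow> nat) set" and a :: "'d \<Rightarrow> nat"
  assumes "finite A"
    and "a \<in> PF (monoid_gen A)"
    and "a + a \<in> monoid_gen A"
  shows "monoid_gen A \<union> {a} = monoid_gen (insert a A)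
    \<and> (a \<in> Frob (monoid_gen A) \<and> PF (monoid_gen A) \<noteq> {a}
         \<longrightarrow> MPD_semigroup TYPE('k::field) (monoid_gen A \<union> {a}))
    \<and> (C_semigroup (monoid_gen A) \<longrightarrow> C_semigroup (monoid_gen A \<union> {a}))"
proof -
  define S where "S = monoid_gen A"
  define T where "T = S \<union> {a}"
  have S0: "0 \<in> S" unfolding S_def by (rule monoid_gen.zero)
  have aholes: "a \<in> holes S" and aPF: "\<And>t. t \<in> S - {0} \<Longrightarrow> a + t \<in> S"
    using assms(2) unfolding PF_def S_def by auto
  have aS: "a \<notin> S" using aholes unfolding holes_def by auto
  have a0: "a \<noteq> 0" using aS S0 by auto
  have aa: "a + a \<in> S" using assms(3) S_def by simp
  have Sadd: "x \<in> S \<Longrightarrow> y \<in> S \<Longrightarrow> x + y \<in> S" for x y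
    unfolding S_def by (rule monoid_gen.add)
  have Tadd: "x \<in> T \<Longrightarrow> y \<in> T \<Longrightarrow> x + y \<in> T" for x y
  proof -
    assume x: "x \<in> T" and y: "y \<in> T"
    show "x + y \<in> T"
    proof (cases "x = a")
      case xa: True
      show ?thesis
      proof (cases "y = a")
        case True then show ?thesis using xa aa T_def by simp
      next
        case False
        then have "y \<in> S" using y T_def by simp
        then show ?thesis using xa aPF[of y] T_def by (cases "y = 0") auto
      qed
    next
      case xna: False
      then have xS: "x \<in> S" using x T_def by simp
      show ?thesis
      proof (cases "y = a")
        case True then show ?thesis using xS aPF[of x] T_def by (cases "x = 0") (auto simp: add.commute)
      next
        case False
        then have "y \<in> S" using y T_def by simp
        then show ?thesis using xS Sadd T_def by simp
      qed
    qed
  qed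
  have part1: "T = monoid_gen (insert a A)"
  proof
    show "T \<subseteq> monoid_gen (insert a A)"
    proof
      fix x assume "x \<in> T"
      then show "x \<in> monoid_gen (insert a A)"
        unfolding T_def S_def using gen_mono[of _ A "insert a A"]
        by (auto intro: monoid_gen.gen)
    qed
  next
    show "monoid_gen (insert a A) \<subseteq> T"
    proof
      fix x assume "x \<in> monoid_gen (insert a A)"
      then show "x \<in> T"
      proof (induction rule: monoid_gen.induct)
        case zero then show ?case unfolding T_def using S0 by blast
      next
        case (gen x) then show ?case using T_def S_def by (auto intro: monoid_gen.gen)
      next
        case (add x y) then show ?case using Tadd by blast
      qed
    qed
  qed
  have partc: "C_semigroup S \<longrightarrow> C_semigroup T"
  proof
    assume "C_semigroup S"
    then have fin: "finite (holes S)" unfolding C_semigroup_def .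
    have "holes T \<subseteq> holes S"
      using cone_insert[OF aa] unfolding holes_def T_def by auto
    then show "C_semigroup T" unfolding C_semigroup_def using fin finite_subset by blast
  qed
  have parta: "a \<in> Frob S \<and> PF S \<noteq> {a} \<longrightarrow> MPD_semigroup TYPE('k::field) T"
  proof
    assume H: "a \<in> Frob S \<and> PF S \<noteq> {a}"
    obtain le where le: "term_order le" and lemax: "\<And>h. h \<in> holes S \<Longrightarrow> le h a"
      using H unfolding Frob_def by blast
    obtain b where bPF: "b \<in> PF S" and ba: "b \<noteq> a"
      using H assms(2) S_def by blast
    have bholes: "b \<in> holes S" and bPF': "\<And>t. t \<in> S - {0} \<Longrightarrow> b + t \<in> S"
      using bPF unfolding PF_def by auto
    have bS: "b \<notin> S" using bholes unfolding holes_def by auto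
    have b0: "b \<noteq> 0" using bS S0 by auto
    have bT: "b \<notin> T" using bS ba T_def by auto
    have baS: "b + a \<in> S"
    proof (rule ccontr)
      assume nS: "b + a \<notin> S"
      have "(\<lambda>j. of_nat ((b + a) j) :: rat) \<in> pos_cone S"
        unfolding cone_of_add
        by (rule cone_add) (use aholes bholes in \<open>auto simp: holes_def\<close>)
      then have "b + a \<in> holes S" using nS unfolding holes_def by simp
      then have l1: "le (b + a) a" by (rule lemax)
      have lz: "\<forall>x. le 0 x" using le unfolding term_order_def by blast
      have lmono: "\<forall>x y z. le x y \<longrightarrow> le (x + z) (y + z)"
        using le unfolding term_order_def by blast
      have lanti: "\<forall>x y. le x y \<and> le y x \<longrightarrow> x = y"
        using le unfolding term_order_def by blast
      have "le 0 b" using lz by blast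
      then have "le (0 + a) (b + a)" using lmono by blast
      then have "le a (b + a)" by simp
      with l1 have "b + a = a" using lanti by blast
      then have "b = 0" by (simp add: fun_eq_iff)
      with b0 show False by simp
    qed
    have bTT: "\<And>t. t \<in> T - {0} \<Longrightarrow> b + t \<in> T"
      using bPF' baS T_def by auto
    have aT: "a \<in> T" "a \<noteq> 0" using T_def a0 by auto
    define x :: "('d \<Rightarrow> nat) \<Rightarrow> ('d \<Rightarrow> nat) \<Rightarrow>\<^sub>0 'k" where "x t = Poly_Mapping.single t 1" for t
    have keysx: "Poly_Mapping.keys (x t) = {t}" for t by (simp add: x_def)
    have shift: "Poly_Mapping.lookup (x t * p) (t + s) = Poly_Mapping.lookup p s" for t s p
      unfolding x_def by (rule lookup_single_mult_shift)
    have xT: "Poly_Mapping.keys (x t * p) \<subseteq> T" if "\<And>v. v \<in> Poly_Mapping.keys p \<Longrightarrow> t + v \<in> T" for t p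
      unfolding x_def using that by (rule keys_single_mult_sub)
    have xmult: "x s * x t = x (s + t)" for s t
      unfolding x_def by (simp add: mult_single)
    have nzd: "\<forall>h \<in> sgr TYPE('k) T. x a * h = 0 \<longrightarrow> h = 0"
    proof (intro ballI impI)
      fix h :: "('d \<Rightarrow> nat) \<Rightarrow>\<^sub>0 'k" assume "x a * h = 0"
      then have "Poly_Mapping.lookup h s = 0" for s using shift[of a h s] by simp
      then show "h = 0" by (intro poly_mapping_eqI) simp
    qed
    have d1: "depth_ge1 TYPE('k) T"
      unfolding depth_ge1_def
    proof (intro bexI[of _ "x a"] conjI nzd ballI)
      show "x a \<in> sgr_max TYPE('k) T" unfolding sgr_max_def using aT by (simp add: keysx)
      fix q :: "('d \<Rightarrow> nat) \<Rightarrow>\<^sub>0 'k"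
      have "Poly_Mapping.lookup (x a * q) 0 = 0"
        unfolding x_def by (rule lookup_single_mult_zero) (use a0 nat_fun_add_eq_0 in metis)
      then show "x a * q \<noteq> 1" by (metis lookup_one_zero zero_neq_one)
    qed
    have nd2: "\<not> depth_ge2 TYPE('k) T"
    proof
      assume "depth_ge2 TYPE('k) T"
      then obtain f g where f: "f \<in> sgr_max TYPE('k) T" and g: "g \<in> sgr_max TYPE('k) T"
        and fnzd: "\<forall>h \<in> sgr TYPE('k) T. f * h = 0 \<longrightarrow> h = 0"
        and c2: "\<forall>h \<in> sgr TYPE('k) T. (\<exists>q \<in> sgr TYPE('k) T. g * h = f * q) \<longrightarrow> (\<exists>q \<in> sgr TYPE('k) T. h = f * q)"
        unfolding depth_ge2_def by (elim bexE conjE) (rule that, assumption+)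
      have kf: "Poly_Mapping.keys f \<subseteq> T - {0}" using f unfolding sgr_max_def by simp
      have kg: "Poly_Mapping.keys g \<subseteq> T - {0}" using g unfolding sgr_max_def by simp
      have hR: "x b * f \<in> sgr TYPE('k) T"
        unfolding sgr_def using xT[of f b] kf bTT by blast
      have q0R: "x b * g \<in> sgr TYPE('k) T"
        unfolding sgr_def using xT[of g b] kg bTT by blast
      have "g * (x b * f) = f * (x b * g)" by (simp add: ac_simps)
      then obtain q where qR: "q \<in> sgr TYPE('k) T" and hq: "x b * f = f * q"
        using c2 hR q0R by blast
      have kq: "Poly_Mapping.keys q \<subseteq> T" using qR unfolding sgr_def by simp
      define w where "w = x (a + b) - x a * q"
      have wR: "w \<in> sgr TYPE('k) T"
      proof -
        have "a + b \<in> T" using bTT[of a] aT by (simp add: add.commute)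
        moreover have "Poly_Mapping.keys (x a * q) \<subseteq> T"
          by (rule xT) (use kq aT Tadd in blast)
        ultimately show ?thesis unfolding sgr_def w_def using keys_diff[of "x (a + b)" "x a * q"]
          by (auto simp: keysx)
      qed
      have "f * w = x a * (x b * f - f * q)"
        unfolding w_def xmult[symmetric] by (simp add: algebra_simps)
      then have "f * w = 0" using hq by simp
      then have "w = 0" using fnzd wR by blast
      then have "x (a + b) = x a * q" unfolding w_def by simp
      then have "Poly_Mapping.lookup (x (a + b)) (a + b) = Poly_Mapping.lookup q b"
        using shift[of a q b] by simp
      then have "Poly_Mapping.lookup q b = 1" by (simp add: x_def)
      then have "b \<in> Poly_Mapping.keys q" by (simp add: in_keys_iff)
      with kq bT show False by blast
    qed
    show "MPD_semigroup TYPE('k) T"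
      unfolding MPD_semigroup_def using d1 nd2 by blast
  qed
  show ?thesis using part1 parta partc unfolding T_def S_def by blast
qed
end
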